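(* Let $P$ be a $\mathcal{V}$-poset, $A$ a maximal antichain of $P$, and let $P\cup\{g\}$ be obtained by adding a new greatest element $g$. For $a\in A$ let $P_a$ be the set related to $a$ computed in $P$ and $P'_a$ the set related to $a$ computed in $P\cup\{g\}$. Then: (i) the number $b(A)$ of basic elements in $A$ is the same in $P$ and in $P\cup\{g\}$; (ii) if $a$ is an upper element, $P'_a=P_a$; (iii) if $a$ is a lower element not associated to the set of all basic elements of $P$, then $P'_a=P_a$; (iv) if $a$ is a lower element associated to the set of all basic elements of $P$, then $P'_a=P_a\cup\{g\}$.
   Context: All posets are finite. A $\mathcal{V}$-poset is a poset generated from the empty poset by repeatedly applying: disjoint union of $\mathcal{V}$-posets, adding a new greatest element, adding a new least element. An element $x$ is basic if: (B.1) there are no two incomparable elements $u,v$ with $x>u$ and $x>v$; (B.2) there are no two incomparable elements $u,v$ with $x<u$ and $x<v$; (B.3) there is no element $u$ with $u<x$ such that for all $w\neq u,x$ one has ($u\ge w\iff x\ge w$) and ($u\le w\iff x\le w$). An element is associated to a set $B$ of basic elements if it is comparable to every element of $B$ and incomparable to every other basic element. A non-basic element $u$ is upper if $u>b$ for some basic $b$, and lower if $u<b$ for some basic $b$. For an element $a$ of a $\mathcal{V}$-poset $Q$, the set related to $a$ in $Q$ is defined as follows: if $a$ is basic, $Q_a=\emptyset$; otherwise let $B$ be the set of basic elements to which $a$ is associated; if $a$ is a lower element, $Q_a=\{b\in Q: a<b,\ \text{there is no } c \text{ with } c<b \text{ and } c \text{ incomparable to } a\}$; if $a$ is an upper element, $Q_a=\{b\in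 Q: a>b,\ \text{there is no } c \text{ with } c>b \text{ and } c \text{ incomparable to } a\}\setminus\{\ell\in Q: \ell \text{ is a lower element associated to } B\}$. *)

theory Defs
  imports Main
begin

text \<open>A finite poset is represented by its carrier S and its (reflexive) order
relation R, a set of pairs with (x,y) in R meaning x \<le> y.\<close>

inductive vposet :: "'a set \<Rightarrow> ('a \<times> 'a) set \<Rightarrow> bool" where
  empty: "vposet {} {}"
| union: "vposet S1 R1 \<Longrightarrow> vposet S2 R2 \<Longrightarrow> S1 \<inter> S2 = {} \<Longrightarrow>
          vposet (S1 \<union> S2) (R1 \<union> R2)"
| top: "vposet S R \<Longrightarrow> g \<notin> S \<Longrightarrow>
          vposet (insert g S) (R \<union> {(x, g) | x. x \<in> insert g S})"
| bot: "vposet S R \<Longrightarrow> l \<notin> S \<Longrightarrow>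
          vposet (insert l S) (R \<union> {(l, x) | x. x \<in> insert l S})"

definition add_top_rel :: "'a set \<Rightarrow> ('a \<times> 'a) set \<Rightarrow> 'a \<Rightarrow> ('a \<times> 'a) set" where
  "add_top_rel S R g = R \<union> {(x, g) | x. x \<in> insert g S}"

definition pless :: "('a \<times> 'a) set \<Rightarrow> 'a \<Rightarrow> 'a \<Rightarrow> bool" where
  "pless R x y \<longleftrightarrow> (x, y) \<in> R \<and> x \<noteq> y"

definition comparable :: "('a \<times> 'a) set \<Rightarrow> 'a \<Rightarrow> 'a \<Rightarrow> bool" where
  "comparable R x y \<longleftrightarrow> (x, y) \<in> R \<or> (y, x) \<in> R"

definition antichain :: "'a set \<Rightarrow> ('a \<times> 'a) set \<Rightarrow> 'a set \<Rightarrow> bool" where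
  "antichain S R A \<longleftrightarrow> A \<subseteq> S \<and> (\<forall>x\<in>A. \<forall>y\<in>A. x \<noteq> y \<longrightarrow> \<not> comparable R x y)"

definition maximal_antichain :: "'a set \<Rightarrow> ('a \<times> 'a) set \<Rightarrow> 'a set \<Rightarrow> bool" where
  "maximal_antichain S R A \<longleftrightarrow> antichain S R A \<and>
     (\<forall>B. antichain S R B \<and> A \<subseteq> B \<longrightarrow> B = A)"

definition basic :: "'a set \<Rightarrow> ('a \<times> 'a) set \<Rightarrow> 'a \<Rightarrow> bool" where
  "basic S R x \<longleftrightarrow> x \<in> S \<and>
     \<not> (\<exists>u\<in>S. \<exists>v\<in>S. pless R u x \<and> pless R v x \<and> \<not> comparable R u v) \<and>
     \<not> (\<exists>u\<in>S. \<exists>v\<in>S. pless R x u \<and> pless R x v \<and> \<not> comparable R u v) \<and>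
     \<not> (\<exists>u\<in>S. pless R u x \<and>
          (\<forall>w\<in>S. w \<noteq> u \<and> w \<noteq> x \<longrightarrow>
             (((w, u) \<in> R \<longleftrightarrow> (w, x) \<in> R) \<and> ((u, w) \<in> R \<longleftrightarrow> (x, w) \<in> R))))"

definition basics :: "'a set \<Rightarrow> ('a \<times> 'a) set \<Rightarrow> 'a set" where
  "basics S R = {x \<in> S. basic S R x}"

definition associated :: "'a set \<Rightarrow> ('a \<times> 'a) set \<Rightarrow> 'a \<Rightarrow> 'a set \<Rightarrow> bool" where
  "associated S R a B \<longleftrightarrow> a \<in> S \<and> B \<subseteq> basics S R \<and>
     (\<forall>b\<in>B. comparable R a b) \<and> (\<forall>b\<in>basics S R - B. \<not> comparable R a b)"

definition upper :: "'a set \<Rightarrow> ('a \<times> 'a) set \<Rightarrow> 'a \<Rightarrow> bool" where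
  "upper S R u \<longleftrightarrow> u \<in> S \<and> \<not> basic S R u \<and> (\<exists>b\<in>basics S R. pless R b u)"

definition lower :: "'a set \<Rightarrow> ('a \<times> 'a) set \<Rightarrow> 'a \<Rightarrow> bool" where
  "lower S R u \<longleftrightarrow> u \<in> S \<and> \<not> basic S R u \<and> (\<exists>b\<in>basics S R. pless R u b)"

text \<open>The set related to a. The set B of basic elements to which a is
associated is {b basic. comparable a b}.\<close>
definition related :: "'a set \<Rightarrow> ('a \<times> 'a) set \<Rightarrow> 'a \<Rightarrow> 'a set" where
  "related S R a =
    (if basic S R a then {}
     else if lower S R a then
       {b \<in> S. pless R a b \<and> \<not> (\<exists>c\<in>S. pless R c b \<and> \<not> comparable R c a)}
     else if upper S R a then
       {b \<in> S. pless R b a \<and> \<not> (\<exists>c\<in>S. pless R b c \<and> \<not> comparable R c a)}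
       - {l \<in> S. lower S R l \<and>
                 associated S R l {b \<in> basics S R. comparable R a b}}
     else {})"

end

theory Submission
  imports Defs
begin


lemma top_rel:
  assumes "R \<subseteq> S \<times> S" "g \<notin> S"
  shows "x \<in> S \<Longrightarrow> y \<in> S \<Longrightarrow> (x,y) \<in> add_top_rel S R g \<longleftrightarrow> (x,y) \<in> R"
    and "x \<in> insert g S \<Longrightarrow> (x,g) \<in> add_top_rel S R g"
    and "(g,y) \<in> add_top_rel S R g \<longleftrightarrow> y = g"
    and "(x,y) \<in> add_top_rel S R g \<Longrightarrow> x \<in> insert g S \<and> y \<in> insert g S"
  using assms by (auto simp: add_top_rel_def)

lemma top_basic_S:
  assumes "R \<subseteq> S \<times> S" "g \<notin> S" "x \<in> S"
  shows "basic (insert g S) (add_top_rel S R g) x \<longleftrightarrow> basic S R x"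
proof -
  note tr = top_rel[OF assms(1,2)]
  have b1: "(\<exists>u\<in>insert g S. \<exists>v\<in>insert g S. pless (add_top_rel S R g) u x \<and> pless (add_top_rel S R g) v x \<and> \<not> comparable (add_top_rel S R g) u v)
     \<longleftrightarrow> (\<exists>u\<in>S. \<exists>v\<in>S. pless R u x \<and> pless R v x \<and> \<not> comparable R u v)"
    using assms tr unfolding pless_def comparable_def by auto
  have b2: "(\<exists>u\<in>insert g S. \<exists>v\<in>insert g S. pless (add_top_rel S R g) x u \<and> pless (add_top_rel S R g) x v \<and> \<not> comparable (add_top_rel S R g) u v)
     \<longleftrightarrow> (\<exists>u\<in>S. \<exists>v\<in>S. pless R x u \<and> pless R x v \<and> \<not> comparable R u v)"
    using assms tr unfolding pless_def comparable_def by auto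
  have b3: "(\<exists>u\<in>insert g S. pless (add_top_rel S R g) u x \<and>
          (\<forall>w\<in>insert g S. w \<noteq> u \<and> w \<noteq> x \<longrightarrow>
             (((w, u) \<in> add_top_rel S R g \<longleftrightarrow> (w, x) \<in> add_top_rel S R g) \<and> ((u, w) \<in> add_top_rel S R g \<longleftrightarrow> (x, w) \<in> add_top_rel S R g))))
     \<longleftrightarrow> (\<exists>u\<in>S. pless R u x \<and>
          (\<forall>w\<in>S. w \<noteq> u \<and> w \<noteq> x \<longrightarrow>
             (((w, u) \<in> R \<longleftrightarrow> (w, x) \<in> R) \<and> ((u, w) \<in> R \<longleftrightarrow> (x, w) \<in> R))))" (is "?L \<longleftrightarrow> ?R")
  proof
    assume "?L" then obtain u where u: "u \<in> insert g S" "pless (add_top_rel S R g) u x"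
      "\<forall>w\<in>insert g S. w \<noteq> u \<and> w \<noteq> x \<longrightarrow>
             (((w, u) \<in> add_top_rel S R g \<longleftrightarrow> (w, x) \<in> add_top_rel S R g) \<and> ((u, w) \<in> add_top_rel S R g \<longleftrightarrow> (x, w) \<in> add_top_rel S R g))" by blast
    have "u \<noteq> g" using u(2) assms tr unfolding pless_def by auto
    hence uS: "u \<in> S" using u(1) by auto
    show ?R using u uS assms tr unfolding pless_def by (intro bexI[of _ u]) auto
  next
    assume "?R" then obtain u where u: "u \<in> S" "pless R u x"
      "\<forall>w\<in>S. w \<noteq> u \<and> w \<noteq> x \<longrightarrow>
             (((w, u) \<in> R \<longleftrightarrow> (w, x) \<in> R) \<and> ((u, w) \<in> R \<longleftrightarrow> (x, w) \<in> R))" by blast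
    show ?L using u assms tr unfolding pless_def by (intro bexI[of _ u]) auto
  qed
  show ?thesis unfolding basic_def using b1 b2 b3 assms by auto
qed



definition leastS :: "'a set \<Rightarrow> ('a \<times> 'a) set \<Rightarrow> 'a \<Rightarrow> bool" where
  "leastS S R x \<longleftrightarrow> (\<forall>w\<in>S. w \<noteq> x \<longrightarrow> (w,x) \<notin> R \<and> (x,w) \<in> R)"

definition chainS :: "'a set \<Rightarrow> ('a \<times> 'a) set \<Rightarrow> bool" where
  "chainS S R \<longleftrightarrow> (\<forall>x\<in>S. \<forall>y\<in>S. comparable R x y)"

definition add_bot_rel :: "'a set \<Rightarrow> ('a \<times> 'a) set \<Rightarrow> 'a \<Rightarrow> ('a \<times> 'a) set" where
  "add_bot_rel S R l = R \<union> {(l, x) | x. x \<in> insert l S}"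

lemma top_g_not_basic:
  assumes "R \<subseteq> S \<times> S" "g \<notin> S" "m \<in> S" "\<forall>x\<in>S. (x,x) \<in> R" "\<forall>w\<in>S. (m,w) \<in> R \<longrightarrow> w = m"
  shows "\<not> basic (insert g S) (add_top_rel S R g) g"
proof
  note tr = top_rel[OF assms(1,2)]
  assume b: "basic (insert g S) (add_top_rel S R g) g"
  show False
  proof (cases "\<forall>w\<in>S. (w,m) \<in> R")
    case True
    have "pless (add_top_rel S R g) m g" using tr assms unfolding pless_def by auto
    moreover have "\<forall>w\<in>insert g S. w \<noteq> m \<and> w \<noteq> g \<longrightarrow>
             (((w, m) \<in> add_top_rel S R g \<longleftrightarrow> (w, g) \<in> add_top_rel S R g) \<and> ((m, w) \<in> add_top_rel S R g \<longleftrightarrow> (g, w) \<in> add_top_rel S R g))"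
      using True assms tr by auto
    ultimately show False using b assms unfolding basic_def by blast
  next
    case False
    then obtain w where w: "w \<in> S" "(w,m) \<notin> R" by auto
    hence "w \<noteq> m" using assms by auto
    hence "(m,w) \<notin> R" using assms w by auto
    hence "pless (add_top_rel S R g) m g \<and> pless (add_top_rel S R g) w g \<and> \<not> comparable (add_top_rel S R g) m w"
      using tr assms w unfolding pless_def comparable_def by auto
    thus False using b assms w unfolding basic_def by blast
  qed
qed

lemma bot_rel:
  assumes "R \<subseteq> S \<times> S" "l \<notin> S"
  shows "x \<in> S \<Longrightarrow> y \<in> S \<Longrightarrow> (x,y) \<in> add_bot_rel S R l \<longleftrightarrow> (x,y) \<in> R"
    and "x \<in> insert l S \<Longrightarrow> (l,x) \<in> add_bot_rel S R l"
    and "(y,l) \<in> add_bot_rel S R l \<longleftrightarrow> y = l"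
    and "(x,y) \<in> add_bot_rel S R l \<Longrightarrow> x \<in> insert l S \<and> y \<in> insert l S"
  using assms by (auto simp: add_bot_rel_def)

lemma bot_basic_S:
  assumes "R \<subseteq> S \<times> S" "l \<notin> S" "x \<in> S"
  shows "basic (insert l S) (add_bot_rel S R l) x \<longleftrightarrow> basic S R x \<and> \<not> leastS S R x"
proof -
  note tr = bot_rel[OF assms(1,2)]
  have b1: "(\<exists>u\<in>insert l S. \<exists>v\<in>insert l S. pless (add_bot_rel S R l) u x \<and> pless (add_bot_rel S R l) v x \<and> \<not> comparable (add_bot_rel S R l) u v)
     \<longleftrightarrow> (\<exists>u\<in>S. \<exists>v\<in>S. pless R u x \<and> pless R v x \<and> \<not> comparable R u v)"
    using assms tr unfolding pless_def comparable_def by auto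
  have b2: "(\<exists>u\<in>insert l S. \<exists>v\<in>insert l S. pless (add_bot_rel S R l) x u \<and> pless (add_bot_rel S R l) x v \<and> \<not> comparable (add_bot_rel S R l) u v)
     \<longleftrightarrow> (\<exists>u\<in>S. \<exists>v\<in>S. pless R x u \<and> pless R x v \<and> \<not> comparable R u v)"
    using assms tr unfolding pless_def comparable_def by auto
  have b3: "(\<exists>u\<in>insert l S. pless (add_bot_rel S R l) u x \<and>
          (\<forall>w\<in>insert l S. w \<noteq> u \<and> w \<noteq> x \<longrightarrow>
             (((w, u) \<in> add_bot_rel S R l \<longleftrightarrow> (w, x) \<in> add_bot_rel S R l) \<and> ((u, w) \<in> add_bot_rel S R l \<longleftrightarrow> (x, w) \<in> add_bot_rel S R l))))
     \<longleftrightarrow> (\<exists>u\<in>S. pless R u x \<and>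
          (\<forall>w\<in>S. w \<noteq> u \<and> w \<noteq> x \<longrightarrow>
             (((w, u) \<in> R \<longleftrightarrow> (w, x) \<in> R) \<and> ((u, w) \<in> R \<longleftrightarrow> (x, w) \<in> R)))) \<or> leastS S R x"
    (is "?L \<longleftrightarrow> ?R \<or> ?Q")
  proof
    assume "?L" then obtain u where u: "u \<in> insert l S" "pless (add_bot_rel S R l) u x"
      "\<forall>w\<in>insert l S. w \<noteq> u \<and> w \<noteq> x \<longrightarrow>
             (((w, u) \<in> add_bot_rel S R l \<longleftrightarrow> (w, x) \<in> add_bot_rel S R l) \<and> ((u, w) \<in> add_bot_rel S R l \<longleftrightarrow> (x, w) \<in> add_bot_rel S R l))" by blast
    show "?R \<or> ?Q"
    proof (cases "u = l")
      case True
      have "?Q" unfolding leastS_def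
      proof (intro ballI impI)
        fix w assume "w \<in> S" "w \<noteq> x"
        thus "(w, x) \<notin> R \<and> (x, w) \<in> R" using u(3) True tr assms by auto
      qed
      thus ?thesis ..
    next
      case False
      hence uS: "u \<in> S" using u(1) by auto
      have ?R using u uS assms tr unfolding pless_def by (intro bexI[of _ u]) auto
      thus ?thesis ..
    qed
  next
    assume "?R \<or> ?Q"
    thus ?L
    proof
      assume "?R" then obtain u where u: "u \<in> S" "pless R u x"
        "\<forall>w\<in>S. w \<noteq> u \<and> w \<noteq> x \<longrightarrow>
             (((w, u) \<in> R \<longleftrightarrow> (w, x) \<in> R) \<and> ((u, w) \<in> R \<longleftrightarrow> (x, w) \<in> R))" by blast
      show ?L using u assms tr unfolding pless_def by (intro bexI[of _ u]) auto
    next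
      assume "?Q"
      show ?L using \<open>?Q\<close> assms tr unfolding pless_def leastS_def by (intro bexI[of _ l]) auto
    qed
  qed
  show ?thesis unfolding basic_def using b1 b2 b3 assms by auto
qed

lemma bot_basic_l:
  assumes "R \<subseteq> S \<times> S" "l \<notin> S"
  shows "basic (insert l S) (add_bot_rel S R l) l \<longleftrightarrow> chainS S R"
proof -
  note tr = bot_rel[OF assms(1,2)]
  show ?thesis unfolding basic_def chainS_def pless_def comparable_def
    using tr assms by auto
qed

lemma union_basic:
  assumes "R1 \<subseteq> S1 \<times> S1" "R2 \<subseteq> S2 \<times> S2" "S1 \<inter> S2 = {}" "x \<in> S1"
  shows "basic (S1 \<union> S2) (R1 \<union> R2) x \<longleftrightarrow> basic S1 R1 x"
proof -
  have r: "\<And>y. (x,y) \<in> R1 \<union> R2 \<longleftrightarrow> (x,y) \<in> R1" "\<And>y. (y,x) \<in> R1 \<union> R2 \<longleftrightarrow> (y,x) \<in> R1"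
    using assms by auto
  have r2: "\<And>u y. u \<in> S1 \<Longrightarrow> (u,y) \<in> R1 \<union> R2 \<longleftrightarrow> (u,y) \<in> R1" "\<And>u y. u \<in> S1 \<Longrightarrow> (y,u) \<in> R1 \<union> R2 \<longleftrightarrow> (y,u) \<in> R1"
    using assms by auto
  have s1: "\<And>u y. (u,y) \<in> R1 \<Longrightarrow> u \<in> S1 \<and> y \<in> S1" using assms by auto
  have b1: "(\<exists>u\<in>S1 \<union> S2. \<exists>v\<in>S1 \<union> S2. pless (R1 \<union> R2) u x \<and> pless (R1 \<union> R2) v x \<and> \<not> comparable (R1 \<union> R2) u v)
     \<longleftrightarrow> (\<exists>u\<in>S1. \<exists>v\<in>S1. pless R1 u x \<and> pless R1 v x \<and> \<not> comparable R1 u v)"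
    unfolding pless_def comparable_def using r r2 s1 by (auto; blast)
  have b2: "(\<exists>u\<in>S1 \<union> S2. \<exists>v\<in>S1 \<union> S2. pless (R1 \<union> R2) x u \<and> pless (R1 \<union> R2) x v \<and> \<not> comparable (R1 \<union> R2) u v)
     \<longleftrightarrow> (\<exists>u\<in>S1. \<exists>v\<in>S1. pless R1 x u \<and> pless R1 x v \<and> \<not> comparable R1 u v)"
    unfolding pless_def comparable_def using r r2 s1 by (auto; blast)
  have b3: "(\<exists>u\<in>S1 \<union> S2. pless (R1 \<union> R2) u x \<and>
          (\<forall>w\<in>S1 \<union> S2. w \<noteq> u \<and> w \<noteq> x \<longrightarrow>
             (((w, u) \<in> R1 \<union> R2 \<longleftrightarrow> (w, x) \<in> R1 \<union> R2) \<and> ((u, w) \<in> R1 \<union> R2 \<longleftrightarrow> (x, w) \<in> R1 \<union> R2))))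
     \<longleftrightarrow> (\<exists>u\<in>S1. pless R1 u x \<and>
          (\<forall>w\<in>S1. w \<noteq> u \<and> w \<noteq> x \<longrightarrow>
             (((w, u) \<in> R1 \<longleftrightarrow> (w, x) \<in> R1) \<and> ((u, w) \<in> R1 \<longleftrightarrow> (x, w) \<in> R1))))"
    (is "?L \<longleftrightarrow> ?R")
  proof
    assume "?L" then obtain u where u: "u \<in> S1 \<union> S2" "pless (R1 \<union> R2) u x"
      "\<forall>w\<in>S1 \<union> S2. w \<noteq> u \<and> w \<noteq> x \<longrightarrow>
             (((w, u) \<in> R1 \<union> R2 \<longleftrightarrow> (w, x) \<in> R1 \<union> R2) \<and> ((u, w) \<in> R1 \<union> R2 \<longleftrightarrow> (x, w) \<in> R1 \<union> R2))" by blast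
    have uS: "u \<in> S1" using u(2) r s1 unfolding pless_def by blast
    show ?R using u uS r r2 unfolding pless_def by (intro bexI[of _ u]) auto
  next
    assume "?R" then obtain u where u: "u \<in> S1" "pless R1 u x"
        "\<forall>w\<in>S1. w \<noteq> u \<and> w \<noteq> x \<longrightarrow>
             (((w, u) \<in> R1 \<longleftrightarrow> (w, x) \<in> R1) \<and> ((u, w) \<in> R1 \<longleftrightarrow> (x, w) \<in> R1))" by blast
    show ?L using u r r2 s1 unfolding pless_def by (intro bexI[of _ u]) auto
  qed
  show ?thesis unfolding basic_def using b1 b2 b3 assms by auto
qed



definition vinv :: "'a set \<Rightarrow> ('a \<times> 'a) set \<Rightarrow> bool" where
  "vinv S R \<longleftrightarrow> R \<subseteq> S \<times> S \<and> (\<forall>x\<in>S. (x,x) \<in> R) \<and>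
     (S \<noteq> {} \<longrightarrow> (\<exists>m\<in>S. \<forall>w\<in>S. (m,w) \<in> R \<longrightarrow> w = m)) \<and>
     (S \<noteq> {} \<longrightarrow> basics S R \<noteq> {}) \<and>
     (\<forall>a. lower S R a \<longrightarrow> \<not> upper S R a) \<and>
     (\<forall>a. lower S R a \<and> (\<forall>b\<in>basics S R. comparable R a b) \<longrightarrow> (\<forall>c\<in>S. comparable R a c)) \<and>
     (S \<noteq> {} \<and> chainS S R \<longrightarrow> basics S R = {x\<in>S. leastS S R x})"

lemma top_basics:
  assumes "vinv S R" "g \<notin> S" "S \<noteq> {}"
  shows "basics (insert g S) (add_top_rel S R g) = basics S R"
proof -
  from assms obtain m where m: "m \<in> S" "\<forall>w\<in>S. (m,w) \<in> R \<longrightarrow> w = m" unfolding vinv_def by blast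
  have R: "R \<subseteq> S \<times> S" "\<forall>x\<in>S. (x,x) \<in> R" using assms unfolding vinv_def by auto
  have "\<not> basic (insert g S) (add_top_rel S R g) g" using top_g_not_basic[OF R(1) assms(2) m(1) R(2) m(2)] .
  thus ?thesis unfolding basics_def using top_basic_S[OF R(1) assms(2)] by auto
qed

lemma top_pless:
  assumes "R \<subseteq> S \<times> S" "g \<notin> S" "x \<in> S" "y \<in> S"
  shows "pless (add_top_rel S R g) x y \<longleftrightarrow> pless R x y"
    and "comparable (add_top_rel S R g) x y \<longleftrightarrow> comparable R x y"
  using top_rel[OF assms(1,2)] assms(3,4) unfolding pless_def comparable_def by auto

lemma vinv_sub: "vinv S R \<Longrightarrow> R \<subseteq> S \<times> S" unfolding vinv_def by auto

lemma basics_sub: "basics S R \<subseteq> S" unfolding basics_def by auto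

lemma top_lower:
  assumes "vinv S R" "g \<notin> S" "S \<noteq> {}" "a \<in> S"
  shows "lower (insert g S) (add_top_rel S R g) a \<longleftrightarrow> lower S R a"
    and "upper (insert g S) (add_top_rel S R g) a \<longleftrightarrow> upper S R a"
    and "B \<subseteq> basics S R \<Longrightarrow> associated (insert g S) (add_top_rel S R g) a B \<longleftrightarrow> associated S R a B"
proof -
  note R = vinv_sub[OF assms(1)]
  note tb = top_basics[OF assms(1-3)] top_basic_S[OF R assms(2) assms(4)]
  note tp = top_pless[OF R assms(2) assms(4)]
  have bsS: "\<And>b. b \<in> basics S R \<Longrightarrow> b \<in> S" unfolding basics_def by auto
  show "lower (insert g S) (add_top_rel S R g) a \<longleftrightarrow> lower S R a"
    unfolding lower_def using tb tp bsS assms(4) by (auto; blast)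
  show "upper (insert g S) (add_top_rel S R g) a \<longleftrightarrow> upper S R a"
    unfolding upper_def using tb top_pless[OF R assms(2) _ assms(4)] bsS assms(4) by (auto; blast)
  show "B \<subseteq> basics S R \<Longrightarrow> associated (insert g S) (add_top_rel S R g) a B \<longleftrightarrow> associated S R a B"
    unfolding associated_def using tb tp bsS assms(4) by (auto; blast)
qed

lemma top_g:
  assumes "vinv S R" "g \<notin> S"
  shows "\<not> lower (insert g S) (add_top_rel S R g) g"
proof -
  note R = vinv_sub[OF assms(1)]
  show ?thesis unfolding lower_def pless_def using top_rel(3)[OF R assms(2)] by auto
qed

lemma singleton_vinv: "vinv {g} {(g,g)}"
proof -
  have b: "basic {g} {(g,g)} g" unfolding basic_def pless_def by auto
  hence bs: "basics {g} {(g,g)} = {g}" unfolding basics_def by auto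
  have "\<not> lower {g} {(g,g)} a" for a unfolding lower_def using b by auto
  moreover have "leastS {g} {(g,g)} g" unfolding leastS_def by auto
  ultimately show ?thesis unfolding vinv_def using bs by auto
qed

lemma top_vinv:
  assumes "vinv S R" "g \<notin> S"
  shows "vinv (insert g S) (add_top_rel S R g)"
proof (cases "S = {}")
  case True
  have "R = {}" using vinv_sub[OF assms(1)] True by auto
  hence "add_top_rel S R g = {(g,g)}" using True unfolding add_top_rel_def by auto
  thus ?thesis using True singleton_vinv by simp
next
  case ne: False
  note R = vinv_sub[OF assms(1)]
  note tr = top_rel[OF R assms(2)]
  note tb = top_basics[OF assms ne]
  note tl = top_lower[OF assms ne]
  note tp = top_pless[OF R assms(2)]
  let ?S = "insert g S" and ?R = "add_top_rel S R g"
  have i1: "?R \<subseteq> ?S \<times> ?S" using R unfolding add_top_rel_def by auto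
  have i2: "\<forall>x\<in>?S. (x,x) \<in> ?R" using assms tr unfolding vinv_def by auto
  have i3: "\<exists>m\<in>?S. \<forall>w\<in>?S. (m,w) \<in> ?R \<longrightarrow> w = m" using tr by auto
  have i4: "basics ?S ?R \<noteq> {}" using tb assms ne unfolding vinv_def by auto
  have i5: "\<forall>a. lower ?S ?R a \<longrightarrow> \<not> upper ?S ?R a"
  proof (intro allI impI)
    fix a assume lo: "lower ?S ?R a"
    hence "a \<in> ?S" unfolding lower_def by auto
    moreover have "a \<noteq> g" using lo top_g[OF assms] by auto
    ultimately have aS: "a \<in> S" by auto
    show "\<not> upper ?S ?R a" using lo tl(1,2)[OF aS] assms(1) unfolding vinv_def by auto
  qed
  have i6: "\<forall>a. lower ?S ?R a \<and> (\<forall>b\<in>basics ?S ?R. comparable ?R a b) \<longrightarrow> (\<forall>c\<in>?S. comparable ?R a c)"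
  proof (intro allI impI)
    fix a assume lo: "lower ?S ?R a \<and> (\<forall>b\<in>basics ?S ?R. comparable ?R a b)"
    hence "a \<in> ?S" unfolding lower_def by auto
    moreover have "a \<noteq> g" using lo top_g[OF assms] by auto
    ultimately have aS: "a \<in> S" by auto
    have "lower S R a" using lo tl(1)[OF aS] by auto
    moreover have "\<forall>b\<in>basics S R. comparable R a b" using lo tb tp(2)[OF aS] basics_sub[of S R] by auto
    ultimately have "\<forall>c\<in>S. comparable R a c" using assms(1) unfolding vinv_def by auto
    thus "\<forall>c\<in>?S. comparable ?R a c" using tp(2)[OF aS] aS tr unfolding comparable_def by auto
  qed
  have i7: "chainS ?S ?R \<longrightarrow> basics ?S ?R = {x\<in>?S. leastS ?S ?R x}"
  proof
    assume ch: "chainS ?S ?R"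
    have "chainS S R" using ch tp(2) unfolding chainS_def by auto
    hence e: "basics S R = {x\<in>S. leastS S R x}" using assms(1) ne unfolding vinv_def by auto
    have "x \<in> S \<Longrightarrow> leastS ?S ?R x \<longleftrightarrow> leastS S R x" for x
      unfolding leastS_def using tr assms(2) by auto
    moreover have "\<not> leastS ?S ?R g"
    proof -
      obtain x where x: "x \<in> S" using ne by auto
      hence "(x,g) \<in> ?R" "x \<noteq> g" using tr(2) assms(2) by auto
      thus ?thesis unfolding leastS_def using x by blast
    qed
    ultimately show "basics ?S ?R = {x\<in>?S. leastS ?S ?R x}" using tb e by auto
  qed
  show ?thesis unfolding vinv_def using i1 i2 i3 i4 i5 i6 i7 by blast
qed



lemma least_nonchain_not_basic:
  assumes "\<forall>y\<in>S. (y,y) \<in> R" "\<not> chainS S R" "x \<in> S" "leastS S R x"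
  shows "\<not> basic S R x"
proof
  assume b: "basic S R x"
  from assms(2) obtain u v where uv: "u \<in> S" "v \<in> S" "\<not> comparable R u v" unfolding chainS_def by auto
  have "u \<noteq> x" "v \<noteq> x" using uv assms(1,3,4) unfolding leastS_def comparable_def by auto
  hence "pless R x u" "pless R x v" using uv assms(4) unfolding leastS_def pless_def by auto
  thus False using b uv unfolding basic_def by blast
qed

lemma bot_vinv:
  assumes "vinv S R" "l \<notin> S"
  shows "vinv (insert l S) (add_bot_rel S R l)"
proof (cases "S = {}")
  case True
  have "R = {}" using vinv_sub[OF assms(1)] True by auto
  hence "add_bot_rel S R l = {(l,l)}" using True unfolding add_bot_rel_def by auto
  thus ?thesis using True singleton_vinv by simp
next
  case ne: False
  note R = vinv_sub[OF assms(1)]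
  note tr = bot_rel[OF R assms(2)]
  let ?S = "insert l S" and ?R = "add_bot_rel S R l"
  have refl: "\<forall>x\<in>S. (x,x) \<in> R" using assms(1) unfolding vinv_def by auto
  have bl: "basic ?S ?R l \<longleftrightarrow> chainS S R" using bot_basic_l[OF R assms(2)] .
  have bS: "\<And>x. x \<in> S \<Longrightarrow> basic ?S ?R x \<longleftrightarrow> basic S R x \<and> \<not> leastS S R x"
    using bot_basic_S[OF R assms(2)] by blast
  have bp: "\<And>x y. x \<in> S \<Longrightarrow> y \<in> S \<Longrightarrow> pless ?R x y \<longleftrightarrow> pless R x y"
     "\<And>x y. x \<in> S \<Longrightarrow> y \<in> S \<Longrightarrow> comparable ?R x y \<longleftrightarrow> comparable R x y"
    using tr unfolding pless_def comparable_def by auto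
  have i1: "?R \<subseteq> ?S \<times> ?S" using R unfolding add_bot_rel_def by auto
  have i2: "\<forall>x\<in>?S. (x,x) \<in> ?R" using refl tr by auto
  have i3: "\<exists>m\<in>?S. \<forall>w\<in>?S. (m,w) \<in> ?R \<longrightarrow> w = m"
  proof -
    obtain m where m: "m \<in> S" "\<forall>w\<in>S. (m,w) \<in> R \<longrightarrow> w = m" using assms(1) ne unfolding vinv_def by blast
    have "\<forall>w\<in>?S. (m,w) \<in> ?R \<longrightarrow> w = m"
    proof
      fix w assume "w \<in> ?S"
      thus "(m,w) \<in> ?R \<longrightarrow> w = m" using m tr assms(2) by auto
    qed
    thus ?thesis using m by blast
  qed
  have bsS: "\<And>b. b \<in> basics S R \<Longrightarrow> b \<in> S" unfolding basics_def by auto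
  have bsS': "\<And>b. b \<in> basics ?S ?R \<Longrightarrow> b \<in> ?S" unfolding basics_def by auto
  show ?thesis
  proof (cases "chainS S R")
    case ch: True
    have e: "basics S R = {x\<in>S. leastS S R x}" using assms(1) ne ch unfolding vinv_def by auto
    have bs': "basics ?S ?R = {l}"
    proof -
      have "x \<in> S \<Longrightarrow> \<not> basic ?S ?R x" for x using bS[of x] e unfolding basics_def by auto
      thus ?thesis using bl ch unfolding basics_def by auto
    qed
    have nl: "\<not> lower ?S ?R a" for a
      unfolding lower_def bs' pless_def using tr(3) by auto
    have chS: "chainS ?S ?R" using ch bp(2) tr unfolding chainS_def comparable_def by auto
    have "leastS ?S ?R l" unfolding leastS_def using tr assms(2) by auto
    moreover have "x \<in> S \<Longrightarrow> \<not> leastS ?S ?R x" for x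
      unfolding leastS_def using tr assms(2) by (metis insertI1)
    ultimately have "basics ?S ?R = {x\<in>?S. leastS ?S ?R x}" using bs' by auto
    thus ?thesis unfolding vinv_def using i1 i2 i3 bs' nl by blast
  next
    case nch: False
    have nb: "\<not> basic ?S ?R l" using bl nch by auto
    have bs': "basics ?S ?R = basics S R"
    proof -
      have "x \<in> S \<Longrightarrow> basic ?S ?R x \<longleftrightarrow> basic S R x" for x
        using bS[of x] least_nonchain_not_basic[OF refl nch, of x] by auto
      thus ?thesis using nb unfolding basics_def by auto
    qed
    have lo: "a \<in> S \<Longrightarrow> lower ?S ?R a \<longleftrightarrow> lower S R a" for a
      unfolding lower_def using bs' bS[of a] bp(1)[of a] bsS least_nonchain_not_basic[OF refl nch, of a]
      by (auto; blast)
    have up: "a \<in> S \<Longrightarrow> upper ?S ?R a \<longleftrightarrow> upper S R a" for a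
      unfolding upper_def using bs' bS[of a] bp(1)[of _ a] bsS least_nonchain_not_basic[OF refl nch, of a]
      by (auto; blast)
    have upl: "\<not> upper ?S ?R l" unfolding upper_def pless_def using tr(3) by auto
    have i4: "basics ?S ?R \<noteq> {}" using bs' assms(1) ne unfolding vinv_def by auto
    have i5: "\<forall>a. lower ?S ?R a \<longrightarrow> \<not> upper ?S ?R a"
    proof (intro allI impI)
      fix a assume la: "lower ?S ?R a"
      hence "a \<in> ?S" unfolding lower_def by auto
      thus "\<not> upper ?S ?R a"
      proof
        assume "a = l" thus ?thesis using upl by simp
      next
        assume aS: "a \<in> S"
        thus ?thesis using la lo up assms(1) unfolding vinv_def by blast
      qed
    qed
    have i6: "\<forall>a. lower ?S ?R a \<and> (\<forall>b\<in>basics ?S ?R. comparable ?R a b) \<longrightarrow> (\<forall>c\<in>?S. comparable ?R a c)"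
    proof (intro allI impI)
      fix a assume la: "lower ?S ?R a \<and> (\<forall>b\<in>basics ?S ?R. comparable ?R a b)"
      hence "a \<in> ?S" unfolding lower_def by auto
      thus "\<forall>c\<in>?S. comparable ?R a c"
      proof
        assume "a = l" thus ?thesis using tr(2) unfolding comparable_def by auto
      next
        assume aS: "a \<in> S"
        have "lower S R a" using la lo aS by auto
        moreover have "\<forall>b\<in>basics S R. comparable R a b" using la bs' bp(2) aS bsS by auto
        ultimately have "\<forall>c\<in>S. comparable R a c" using assms(1) unfolding vinv_def by blast
        thus ?thesis using bp(2) aS tr(2) unfolding comparable_def by auto
      qed
    qed
    have i7: "\<not> chainS ?S ?R" using nch bp(2) unfolding chainS_def by auto
    show ?thesis unfolding vinv_def using i1 i2 i3 i4 i5 i6 i7 by blast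
  qed
qed



lemma union_lu:
  assumes "R1 \<subseteq> S1 \<times> S1" "R2 \<subseteq> S2 \<times> S2" "S1 \<inter> S2 = {}" "a \<in> S1"
  shows "lower (S1 \<union> S2) (R1 \<union> R2) a \<longleftrightarrow> lower S1 R1 a"
    and "upper (S1 \<union> S2) (R1 \<union> R2) a \<longleftrightarrow> upper S1 R1 a"
proof -
  have bb: "\<And>b. b \<in> S1 \<Longrightarrow> b \<in> basics (S1 \<union> S2) (R1 \<union> R2) \<longleftrightarrow> b \<in> basics S1 R1"
    unfolding basics_def using union_basic[OF assms(1-3)] by auto
  have ba: "basic (S1 \<union> S2) (R1 \<union> R2) a \<longleftrightarrow> basic S1 R1 a" using union_basic[OF assms] .
  have p1: "\<And>b. pless (R1 \<union> R2) a b \<longleftrightarrow> pless R1 a b" "\<And>b. pless (R1 \<union> R2) b a \<longleftrightarrow> pless R1 b a"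
    using assms unfolding pless_def by auto
  have p2: "\<And>b. pless R1 a b \<Longrightarrow> b \<in> S1" "\<And>b. pless R1 b a \<Longrightarrow> b \<in> S1"
    using assms unfolding pless_def by auto
  show "lower (S1 \<union> S2) (R1 \<union> R2) a \<longleftrightarrow> lower S1 R1 a"
    unfolding lower_def using ba p1 p2 bb assms(4) by (auto; blast)
  show "upper (S1 \<union> S2) (R1 \<union> R2) a \<longleftrightarrow> upper S1 R1 a"
    unfolding upper_def using ba p1 p2 bb assms(4) by (auto; blast)
qed

lemma union_vinv_ne:
  assumes "vinv S1 R1" "vinv S2 R2" "S1 \<inter> S2 = {}" "S1 \<noteq> {}" "S2 \<noteq> {}"
  shows "vinv (S1 \<union> S2) (R1 \<union> R2)"
proof -
  note R1 = vinv_sub[OF assms(1)] and R2 = vinv_sub[OF assms(2)]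
  have d2: "S2 \<inter> S1 = {}" using assms(3) by auto
  have sw: "S2 \<union> S1 = S1 \<union> S2" "R2 \<union> R1 = R1 \<union> R2" by auto
  let ?S = "S1 \<union> S2" and ?R = "R1 \<union> R2"
  have lu1: "\<And>a. a \<in> S1 \<Longrightarrow> lower ?S ?R a \<longleftrightarrow> lower S1 R1 a"
            "\<And>a. a \<in> S1 \<Longrightarrow> upper ?S ?R a \<longleftrightarrow> upper S1 R1 a"
    using union_lu[OF R1 R2 assms(3)] by auto
  have lu2: "\<And>a. a \<in> S2 \<Longrightarrow> lower ?S ?R a \<longleftrightarrow> lower S2 R2 a"
            "\<And>a. a \<in> S2 \<Longrightarrow> upper ?S ?R a \<longleftrightarrow> upper S2 R2 a"
    using union_lu[OF R2 R1 d2] unfolding sw by auto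
  have bs: "basics ?S ?R = basics S1 R1 \<union> basics S2 R2"
    using union_basic[OF R1 R2 assms(3)] union_basic[OF R2 R1 d2] unfolding sw basics_def by auto
  obtain b1 where b1: "b1 \<in> basics S1 R1" using assms(1,4) unfolding vinv_def by auto
  obtain b2 where b2: "b2 \<in> basics S2 R2" using assms(2,5) unfolding vinv_def by auto
  have b1S: "b1 \<in> S1" and b2S: "b2 \<in> S2" using b1 b2 unfolding basics_def by auto
  have i1: "?R \<subseteq> ?S \<times> ?S" using R1 R2 by auto
  have i2: "\<forall>x\<in>?S. (x,x) \<in> ?R" using assms(1,2) unfolding vinv_def by auto
  have i3: "\<exists>m\<in>?S. \<forall>w\<in>?S. (m,w) \<in> ?R \<longrightarrow> w = m"
  proof -
    obtain m where m: "m \<in> S1" "\<forall>w\<in>S1. (m,w) \<in> R1 \<longrightarrow> w = m" using assms(1,4) unfolding vinv_def by blast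
    have "\<forall>w\<in>?S. (m,w) \<in> ?R \<longrightarrow> w = m" using m R1 R2 assms(3) by blast
    thus ?thesis using m by blast
  qed
  have i4: "basics ?S ?R \<noteq> {}" using bs b1 by auto
  have i5: "\<forall>a. lower ?S ?R a \<longrightarrow> \<not> upper ?S ?R a"
  proof (intro allI impI)
    fix a assume la: "lower ?S ?R a"
    hence "a \<in> ?S" unfolding lower_def by auto
    thus "\<not> upper ?S ?R a"
    proof
      assume "a \<in> S1" thus ?thesis using la lu1 assms(1) unfolding vinv_def by blast
    next
      assume "a \<in> S2" thus ?thesis using la lu2 assms(2) unfolding vinv_def by blast
    qed
  qed
  have i6: "\<forall>a. lower ?S ?R a \<and> (\<forall>b\<in>basics ?S ?R. comparable ?R a b) \<longrightarrow> (\<forall>c\<in>?S. comparable ?R a c)"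
  proof (intro allI impI)
    fix a assume la: "lower ?S ?R a \<and> (\<forall>b\<in>basics ?S ?R. comparable ?R a b)"
    hence c1: "comparable ?R a b1" and c2: "comparable ?R a b2" using bs b1 b2 by auto
    have "a \<in> ?S" using la unfolding lower_def by auto
    thus "\<forall>c\<in>?S. comparable ?R a c"
    proof
      assume "a \<in> S1" thus ?thesis using c2 b2S R1 R2 assms(3) unfolding comparable_def by blast
    next
      assume "a \<in> S2" thus ?thesis using c1 b1S R1 R2 assms(3) unfolding comparable_def by blast
    qed
  qed
  have i7: "\<not> chainS ?S ?R"
  proof
    assume "chainS ?S ?R"
    hence "comparable ?R b1 b2" using b1S b2S unfolding chainS_def by auto
    thus False using b1S b2S R1 R2 assms(3) unfolding comparable_def by blast
  qed
  show ?thesis unfolding vinv_def using i1 i2 i3 i4 i5 i6 i7 by blast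
qed

lemma union_vinv:
  assumes "vinv S1 R1" "vinv S2 R2" "S1 \<inter> S2 = {}"
  shows "vinv (S1 \<union> S2) (R1 \<union> R2)"
proof (cases "S1 = {} \<or> S2 = {}")
  case True
  thus ?thesis
  proof
    assume "S1 = {}" hence "R1 = {}" using vinv_sub[OF assms(1)] by auto
    thus ?thesis using \<open>S1 = {}\<close> assms(2) by simp
  next
    assume "S2 = {}" hence "R2 = {}" using vinv_sub[OF assms(2)] by auto
    thus ?thesis using \<open>S2 = {}\<close> assms(1) by simp
  qed
next
  case False thus ?thesis using union_vinv_ne assms by blast
qed



lemma vposet_vinv: "vposet S R \<Longrightarrow> vinv S R"
proof (induction rule: vposet.induct)
  case empty
  show ?case unfolding vinv_def lower_def basics_def by auto
next
  case (union S1 R1 S2 R2) thus ?case using union_vinv by blast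
next
  case (top S R g)
  have "vinv (insert g S) (add_top_rel S R g)" using top_vinv top.IH top.hyps(2) .
  thus ?case unfolding add_top_rel_def .
next
  case (bot S R l)
  have "vinv (insert l S) (add_bot_rel S R l)" using bot_vinv bot.IH bot.hyps(2) .
  thus ?case unfolding add_bot_rel_def .
qed

theorem lemma3p15:
  fixes S :: "'a set" and R :: "('a \<times> 'a) set" and A :: "'a set" and g :: 'a
  assumes "vposet S R"
    and "maximal_antichain S R A"
    and "g \<notin> S"
  defines "S' \<equiv> insert g S" and "R' \<equiv> add_top_rel S R g"
  shows "card {a \<in> A. basic S R a} = card {a \<in> A. basic S' R' a} \<and>
    (\<forall>a\<in>A. upper S R a \<longrightarrow> related S' R' a = related S R a) \<and>
    (\<forall>a\<in>A. lower S R a \<and> \<not> associated S R a (basics S R)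
           \<longrightarrow> related S' R' a = related S R a) \<and>
    (\<forall>a\<in>A. lower S R a \<and> associated S R a (basics S R)
           \<longrightarrow> related S' R' a = insert g (related S R a))"
proof (cases "S = {}")
  case True
  have "A = {}" using assms(2) True unfolding maximal_antichain_def antichain_def by auto
  thus ?thesis by simp
next
  case ne: False
  have AS: "A \<subseteq> S" using assms(2) unfolding maximal_antichain_def antichain_def by auto
  have iv: "vinv S R" using vposet_vinv[OF assms(1)] .
  note Rs = vinv_sub[OF iv]
  note tr = top_rel[OF Rs assms(3), folded R'_def]
  note tb = top_basics[OF iv assms(3) ne, folded S'_def R'_def]
  note tbS = top_basic_S[OF Rs assms(3), folded S'_def R'_def]
  note tl = top_lower[OF iv assms(3) ne, folded S'_def R'_def]
  note tp = top_pless[OF Rs assms(3), folded R'_def]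
  have lg: "\<not> lower S' R' g" using top_g[OF iv assms(3)] unfolding S'_def R'_def .
  have bsS: "\<And>b. b \<in> basics S R \<Longrightarrow> b \<in> S" unfolding basics_def by auto
  have P1: "card {a \<in> A. basic S R a} = card {a \<in> A. basic S' R' a}"
  proof -
    have "{a \<in> A. basic S R a} = {a \<in> A. basic S' R' a}" using AS tbS by auto
    thus ?thesis by simp
  qed
  have P2: "\<forall>a\<in>A. upper S R a \<longrightarrow> related S' R' a = related S R a"
  proof (intro ballI impI)
    fix a assume aA: "a \<in> A" and ua: "upper S R a"
    have aS: "a \<in> S" using aA AS by auto
    have nb: "\<not> basic S R a" "\<not> basic S' R' a" using ua tbS[OF aS] unfolding upper_def by auto
    have nl: "\<not> lower S R a" "\<not> lower S' R' a" using ua iv tl(1)[OF aS] unfolding vinv_def by auto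
    have ua': "upper S' R' a" using ua tl(2)[OF aS] by auto
    have e1: "{b \<in> S'. pless R' b a \<and> \<not> (\<exists>c\<in>S'. pless R' b c \<and> \<not> comparable R' c a)}
         = {b \<in> S. pless R b a \<and> \<not> (\<exists>c\<in>S. pless R b c \<and> \<not> comparable R c a)}"
    proof (intro set_eqI iffI)
      fix b assume b: "b \<in> {b \<in> S'. pless R' b a \<and> \<not> (\<exists>c\<in>S'. pless R' b c \<and> \<not> comparable R' c a)}"
      have "b \<noteq> g" using b tr(3) aS assms(3) unfolding pless_def by auto
      hence bS: "b \<in> S" using b unfolding S'_def by auto
      show "b \<in> {b \<in> S. pless R b a \<and> \<not> (\<exists>c\<in>S. pless R b c \<and> \<not> comparable R c a)}"
        using b bS tp[OF bS] tp(2)[OF _ aS] aS unfolding S'_def by auto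
    next
      fix b assume b: "b \<in> {b \<in> S. pless R b a \<and> \<not> (\<exists>c\<in>S. pless R b c \<and> \<not> comparable R c a)}"
      hence bS: "b \<in> S" by auto
      have "comparable R' g a" using tr(2) aS unfolding comparable_def S'_def by auto
      thus "b \<in> {b \<in> S'. pless R' b a \<and> \<not> (\<exists>c\<in>S'. pless R' b c \<and> \<not> comparable R' c a)}"
        using b bS tp[OF bS] tp(2)[OF _ aS] aS unfolding S'_def by auto
    qed
    have eB: "{b \<in> basics S' R'. comparable R' a b} = {b \<in> basics S R. comparable R a b}"
      using tb tp(2)[OF aS] bsS by auto
    have e2: "{l \<in> S'. lower S' R' l \<and> associated S' R' l {b \<in> basics S' R'. comparable R' a b}}
        = {l \<in> S. lower S R l \<and> associated S R l {b \<in> basics S R. comparable R a b}}"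
      unfolding eB using lg tl unfolding S'_def by auto
    show "related S' R' a = related S R a"
      unfolding related_def using nb nl ua ua' e1 e2 by simp
  qed
  have lowset: "related S' R' a = related S R a \<union> (if \<forall>c\<in>S. comparable R a c then {g} else {})"
    if aA: "a \<in> A" and la: "lower S R a" for a
  proof -
    have aS: "a \<in> S" using aA AS by auto
    have nb: "\<not> basic S R a" "\<not> basic S' R' a" using la tbS[OF aS] unfolding lower_def by auto
    have la': "lower S' R' a" using la tl(1)[OF aS] by auto
    have r1: "related S R a = {b \<in> S. pless R a b \<and> \<not> (\<exists>c\<in>S. pless R c b \<and> \<not> comparable R c a)}"
      unfolding related_def using nb la by simp
    have r2: "related S' R' a = {b \<in> S'. pless R' a b \<and> \<not> (\<exists>c\<in>S'. pless R' c b \<and> \<not> comparable R' c a)}"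
      unfolding related_def using nb la' by simp
    have gS': "g \<in> S'" unfolding S'_def by auto
    have S'e: "S' = insert g S" unfolding S'_def ..
    have mS: "b \<in> related S' R' a \<longleftrightarrow> b \<in> related S R a" if bS: "b \<in> S" for b
    proof -
      have ngb: "\<not> pless R' g b" using tr(3) bS assms(3) unfolding pless_def by auto
      have ex: "(\<exists>c\<in>S'. pless R' c b \<and> \<not> comparable R' c a) \<longleftrightarrow> (\<exists>c\<in>S. pless R c b \<and> \<not> comparable R c a)"
      proof
        assume "\<exists>c\<in>S'. pless R' c b \<and> \<not> comparable R' c a"
        then obtain c where c: "c \<in> S'" "pless R' c b" "\<not> comparable R' c a" by blast
        have "c \<noteq> g" using c ngb by auto
        hence cS: "c \<in> S" using c S'e by auto
        thus "\<exists>c\<in>S. pless R c b \<and> \<not> comparable R c a" using c tp(1)[OF cS bS] tp(2)[OF cS aS] by blast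
      next
        assume "\<exists>c\<in>S. pless R c b \<and> \<not> comparable R c a"
        then obtain c where c: "c \<in> S" "pless R c b" "\<not> comparable R c a" by blast
        thus "\<exists>c\<in>S'. pless R' c b \<and> \<not> comparable R' c a" using tp(1)[OF c(1) bS] tp(2)[OF c(1) aS] S'e by blast
      qed
      have "b \<in> S'" using bS S'e by auto
      thus ?thesis unfolding r1 r2 using bS ex tp(1)[OF aS bS] by auto
    qed
    have mg: "g \<in> related S' R' a \<longleftrightarrow> (\<forall>c\<in>S. comparable R a c)"
    proof -
      have pa: "pless R' a g" using tr(2) aS assms(3) unfolding pless_def by auto
      have pc: "\<And>c. c \<in> S \<Longrightarrow> pless R' c g" using tr(2) assms(3) unfolding pless_def by auto
      have pg: "\<not> pless R' g g" unfolding pless_def by auto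
      have cc: "\<And>c. c \<in> S \<Longrightarrow> comparable R' c a \<longleftrightarrow> comparable R a c"
        using tp(2)[OF _ aS] unfolding comparable_def by auto
      have "g \<in> related S' R' a \<longleftrightarrow> \<not> (\<exists>c\<in>S'. pless R' c g \<and> \<not> comparable R' c a)"
        unfolding r2 using gS' pa by auto
      also have "\<dots> \<longleftrightarrow> (\<forall>c\<in>S. comparable R a c)" using pc pg cc S'e by auto
      finally show ?thesis .
    qed
    have "related S R a \<subseteq> S" unfolding r1 by auto
    moreover have "related S' R' a \<subseteq> S'" unfolding r2 by auto
    ultimately show ?thesis using mS mg assms(3) S'e by (auto split: if_splits)
  qed
  have P3: "\<forall>a\<in>A. lower S R a \<and> \<not> associated S R a (basics S R)
           \<longrightarrow> related S' R' a = related S R a"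
  proof (intro ballI impI)
    fix a assume aA: "a \<in> A" and h: "lower S R a \<and> \<not> associated S R a (basics S R)"
    have aS: "a \<in> S" using aA AS by auto
    have "\<exists>b\<in>basics S R. \<not> comparable R a b" using h aS unfolding associated_def by auto
    hence nf: "\<not> (\<forall>c\<in>S. comparable R a c)" using bsS by blast
    have e: "(if \<forall>c\<in>S. comparable R a c then {g} else {}) = {}" using nf by (rule if_not_P)
    have "related S' R' a = related S R a \<union> {}" using lowset[OF aA] h unfolding e by blast
    thus "related S' R' a = related S R a" by simp
  qed
  have P4: "\<forall>a\<in>A. lower S R a \<and> associated S R a (basics S R)
           \<longrightarrow> related S' R' a = insert g (related S R a)"
  proof (intro ballI impI)
    fix a assume aA: "a \<in> A" and h: "lower S R a \<and> associated S R a (basics S R)"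
    have "\<forall>b\<in>basics S R. comparable R a b" using h unfolding associated_def by auto
    hence nf: "\<forall>c\<in>S. comparable R a c" using h iv unfolding vinv_def by blast
    have e: "(if \<forall>c\<in>S. comparable R a c then {g} else {}) = {g}" using nf by (rule if_P)
    have "related S' R' a = related S R a \<union> {g}" using lowset[OF aA] h unfolding e by blast
    thus "related S' R' a = insert g (related S R a)" by simp
  qed
  show ?thesis using P1 P2 P3 P4 by blast
qed

end
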